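(* Let $f(\mathbf{x})=\mathbf{x}M\mathbf{x}^T$ be a quadratic form in $s\ge10$ variables, $M=(a_{i,j})$ symmetric with integer entries, and assume that the $5\times5$ matrix $M_0=(a_{i,j+5})_{1\le i,j\le5}$ has rank $5$. For $\mathbf{v}\in\mathbb{Z}^5$ and $1\le i\le 5$ let $h_i(\mathbf{v})=2\sum_{j=1}^5a_{i,j+5}v_j$. Let $X$ be sufficiently large, $1\le Y\le X$, $q$ a positive integer, $c_1,\ldots,c_5\in\mathbb{Z}$, and $H_1,\ldots,H_5$ positive reals with $H_i\ge q\log X$ for all $i$. Let $$\mathcal{H}=\sum_{\mathbf{v}}\rho(v_1)\cdots\rho(v_5),$$ the sum over $\mathbf{v}\in\mathbb{Z}^5$ with $0<|v_j|<Y$, $H_j<|h_j(\mathbf{v})|\le2H_j$ and $h_j(\mathbf{v})\equiv c_j\pmod q$ for $j=1,\ldots,5$. Then $$\mathcal{H}\ll H_1H_2H_3H_4H_5\,q^{-5}\tau(q),$$ with implied constant depending only on $f$.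
   Context: $\rho(x)=\prod_{p\mid x}(1+\frac1p)$ for nonzero integers $x$ (product over primes); $\tau$ is the divisor function. *)

theory Defs
  imports "HOL-Analysis.Analysis" "HOL-Computational_Algebra.Primes"
begin

definition rho :: "int \<Rightarrow> real" where
  "rho x = (\<Prod>p\<in>prime_factors (nat \<bar>x\<bar>). 1 + 1 / real p)"

definition tau :: "nat \<Rightarrow> nat" where
  "tau n = card {d. d dvd n}"

definition idx5 :: "5 \<Rightarrow> nat" where
  "idx5 i = nat (Rep_bit1 i) + 1"

definition M0 :: "(nat \<Rightarrow> nat \<Rightarrow> int) \<Rightarrow> real^5^5" where
  "M0 a = (\<chi> i j. real_of_int (a (idx5 i) (idx5 j + 5)))"

definition hfun :: "(nat \<Rightarrow> nat \<Rightarrow> int) \<Rightarrow> nat \<Rightarrow> (nat \<Rightarrow> int) \<Rightarrow> int" where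
  "hfun a i v = 2 * (\<Sum>j=1..5. a i (j + 5) * v j)"

(* the index set of the sum: vectors v in Z^5 (functions supported on {1..5}) *)
definition Hset :: "(nat \<Rightarrow> nat \<Rightarrow> int) \<Rightarrow> real \<Rightarrow> nat \<Rightarrow> (nat \<Rightarrow> int) \<Rightarrow> (nat \<Rightarrow> real)
    \<Rightarrow> (nat \<Rightarrow> int) set" where
  "Hset a Y q c H = {v. (\<forall>j. j \<notin> {1..5} \<longrightarrow> v j = 0) \<and>
     (\<forall>j\<in>{1..5}. 0 < \<bar>v j\<bar> \<and> real_of_int \<bar>v j\<bar> < Y \<and>
        H j < real_of_int \<bar>hfun a j v\<bar> \<and> real_of_int \<bar>hfun a j v\<bar> \<le> 2 * H j \<and>
        hfun a j v mod int q = c j mod int q)}"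

definition Hsum :: "(nat \<Rightarrow> nat \<Rightarrow> int) \<Rightarrow> real \<Rightarrow> nat \<Rightarrow> (nat \<Rightarrow> int) \<Rightarrow> (nat \<Rightarrow> real) \<Rightarrow> real" where
  "Hsum a Y q c H = (\<Sum>v\<in>Hset a Y q c H. \<Prod>j=1..5. rho (v j))"

end

theory Submission
  imports Defs "HOL-Real_Asymp.Real_Asymp"
begin


lemma prime_dvd_prod_primes_iff:
  assumes "finite A" "\<forall>q\<in>A. prime (q::nat)" "prime p"
  shows "p dvd \<Prod>A \<longleftrightarrow> p \<in> A"
proof
  assume "p dvd \<Prod>A"
  then obtain q where "q \<in> A" "p dvd q" using prime_dvd_prod_iff[OF assms(1) assms(3), of id] by auto
  then show "p \<in> A" using assms primes_dvd_imp_eq by blast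
next
  assume "p \<in> A" then show "p dvd \<Prod>A" using assms(1) by (simp add: dvd_prod_eqI)
qed

lemma prod_primes_dvd_int:
  assumes "finite A" "\<forall>p\<in>A. prime (p::nat) \<and> int p dvd z"
  shows "int (\<Prod>A) dvd z"
  using assms
proof (induction A rule: finite_induct)
  case empty then show ?case by simp
next
  case (insert p F)
  have pr: "prime p" and pd: "int p dvd z" using insert.prems by auto
  have IH: "int (\<Prod>F) dvd z" using insert by auto
  have "\<not> p dvd \<Prod>F" using prime_dvd_prod_primes_iff[of F p] insert by auto
  then have "coprime p (\<Prod>F)" using prime_imp_coprime pr by blast
  then have "coprime (int p) (int (\<Prod>F))" by (simp only: coprime_int_iff)
  then have "int p * int (\<Prod>F) dvd z" using divides_mult pd IH by blast
  then show ?case using insert by simp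
qed

lemma prod_primes_dvd_nat:
  assumes "finite A" "\<forall>p\<in>A. prime (p::nat) \<and> p dvd m"
  shows "\<Prod>A dvd m"
proof -
  have "int (\<Prod>A) dvd int m" using prod_primes_dvd_int[of A "int m"] assms by auto
  then show ?thesis by (simp only: int_dvd_int_iff)
qed

lemma two_pow_card_le_tau:
  assumes "q > 0"
  shows "2 ^ card (prime_factors q) \<le> tau q"
proof -
  let ?P = "prime_factors q"
  have fin: "finite ?P" by simp
  have "card (Pow ?P) = 2 ^ card ?P" using card_Pow fin by blast
  moreover have "card (Pow ?P) \<le> card {d. d dvd q}"
  proof (rule card_inj_on_le[of "\<lambda>A. \<Prod>A"])
    show "inj_on (\<lambda>A. \<Prod>A) (Pow ?P)"
    proof (rule inj_onI)
      fix A B assume A: "A \<in> Pow ?P" and B: "B \<in> Pow ?P" and e: "\<Prod>A = \<Prod>B"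
      have fA: "finite A" "\<forall>q\<in>A. prime q" using A finite_subset fin by auto
      have fB: "finite B" "\<forall>q\<in>B. prime q" using B finite_subset fin by auto
      show "A = B"
      proof (rule set_eqI)
        fix p
        show "p \<in> A \<longleftrightarrow> p \<in> B"
        proof (cases "prime p")
          case True
          then show ?thesis using prime_dvd_prod_primes_iff[OF fA True] prime_dvd_prod_primes_iff[OF fB True] e by simp
        next
          case False then show ?thesis using fA fB by auto
        qed
      qed
    qed
    show "(\<lambda>A. \<Prod>A) ` Pow ?P \<subseteq> {d. d dvd q}"
    proof
      fix d assume "d \<in> (\<lambda>A. \<Prod>A) ` Pow ?P"
      then obtain A where A: "A \<subseteq> ?P" "d = \<Prod>A" by auto
      have "finite A" using A finite_subset fin by auto
      then have "\<Prod>A dvd q" using prod_primes_dvd_nat[of A q] A by auto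
      then show "d \<in> {d. d dvd q}" using A by simp
    qed
    show "finite {d. d dvd q}" using assms by simp
  qed
  ultimately show ?thesis unfolding tau_def by simp
qed

lemma prod_pf_31:
  "(\<Prod>p\<in>prime_factors q. 1 + 31 / real p) \<le> 16 ^ 31 * 2 ^ card (prime_factors q)"
proof -
  let ?P = "prime_factors q"
  have "(\<Prod>p\<in>?P. 1 + 31 / real p) \<le> (\<Prod>p\<in>?P. 2 * (if p < 31 then 16 else 1))"
  proof (rule prod_mono, safe)
    fix p assume "p \<in> ?P"
    then have "p \<ge> 2" using prime_ge_2_nat in_prime_factors_imp_prime by blast
    then have p2: "real p \<ge> 2" by simp
    show "0 \<le> 1 + 31 / real p" by simp
    show "1 + 31 / real p \<le> 2 * (if p < 31 then 16 else 1)"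
    proof (cases "p < 31")
      case True
      have "31 / real p \<le> 31 / 2" using p2 by (intro divide_left_mono) auto
      then show ?thesis using True by simp
    next
      case False
      then have "real p \<ge> 31" by simp
      then have "31 / real p \<le> 1" by simp
      then show ?thesis using False by simp
    qed
  qed
  also have "\<dots> = 2 ^ card ?P * (\<Prod>p\<in>?P. (if p < 31 then 16 else 1))"
    by (simp add: prod.distrib)
  also have "(\<Prod>p\<in>?P. (if p < 31 then 16 else 1::real)) = (\<Prod>p\<in>?P \<inter> {..<31}. 16)"
    by (simp add: prod.If_cases Int_def)
  also have "\<dots> = 16 ^ card (?P \<inter> {..<31})" by simp
  also have "\<dots> \<le> 16 ^ 31"
  proof -
    have "card (?P \<inter> {..<31}) \<le> card {..<31::nat}" by (intro card_mono) auto
    then show ?thesis by (intro power_increasing) auto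
  qed
  finally show ?thesis by (simp add: mult.commute)
qed


lemma cheb_dvd:
  assumes "prime p" "m < p" "p \<le> 2*m"
  shows "p dvd (2*m choose m)"
proof -
  have e: "fact m * fact m * (2*m choose m) = (fact (2*m) :: nat)"
    using binomial_fact_lemma[of m "2*m"] by simp
  have "p dvd fact (2*m)" using assms prime_dvd_fact_iff by blast
  then have "p dvd fact m * (fact m * (2*m choose m))" using e by (simp add: mult.assoc)
  moreover have "\<not> p dvd fact m" using assms prime_dvd_fact_iff by auto
  ultimately show ?thesis using assms(1) prime_dvd_mult_iff by blast
qed

lemma cheb_prod:
  "\<Prod>{p. prime p \<and> m < p \<and> p \<le> 2*m} \<le> (4::nat) ^ m"
proof -
  let ?Q = "{p. prime p \<and> m < p \<and> p \<le> 2*m}"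
  have fin: "finite ?Q" by (rule finite_subset[of _ "{..2*m}"]) auto
  have "\<Prod>?Q dvd (2*m choose m)"
    using prod_primes_dvd_nat[OF fin] cheb_dvd by blast
  moreover have "(2*m choose m) > 0" by simp
  ultimately have "\<Prod>?Q \<le> (2*m choose m)" by (simp add: dvd_imp_le)
  also have "\<dots> \<le> 2 ^ (2*m)" by (rule binomial_le_pow2)
  also have "\<dots> = 4 ^ m" by (simp add: power_mult)
  finally show ?thesis .
qed

lemma cheb_count:
  assumes "i \<ge> 1"
  shows "card {p::nat. prime p \<and> 2^i < p \<and> p \<le> 2^(i+1)} * i \<le> 2^(i+1)"
proof -
  let ?m = "2^i :: nat"
  let ?Q = "{p. prime p \<and> ?m < p \<and> p \<le> 2*?m}"
  have fin: "finite ?Q" by (rule finite_subset[of _ "{..2*?m}"]) auto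
  have "(\<Prod>p\<in>?Q. ?m) \<le> (\<Prod>p\<in>?Q. p)" by (rule prod_mono) auto
  also have "\<dots> \<le> 4 ^ ?m" using cheb_prod[of ?m] by simp
  finally have "?m ^ card ?Q \<le> 4 ^ ?m" by simp
  then have "2 ^ (i * card ?Q) \<le> (2::nat) ^ (2 * ?m)" by (simp add: power_mult)
  then have "i * card ?Q \<le> 2 * ?m" by (subst (asm) power_increasing_iff) auto
  then show ?thesis by (simp add: mult.commute)
qed

lemma cheb_sum_dyadic:
  assumes "i \<ge> 1"
  shows "(\<Sum>p\<in>{p. prime p \<and> 2^i < p \<and> p \<le> 2^(i+1)}. 1 / real p) \<le> 2 / real i"
proof -
  let ?Q = "{p::nat. prime p \<and> 2^i < p \<and> p \<le> 2^(i+1)}"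
  have "(\<Sum>p\<in>?Q. 1 / real p) \<le> (\<Sum>p\<in>?Q. 1 / 2^i)"
  proof (rule sum_mono)
    fix p assume "p \<in> ?Q"
    then have "real p \<ge> 2^i" by (metis (mono_tags, lifting) mem_Collect_eq less_imp_le_nat numeral_power_le_of_nat_cancel_iff)
    then show "1 / real p \<le> 1 / 2^i" by (simp add: frac_le)
  qed
  also have "\<dots> = real (card ?Q) / 2^i" by simp
  also have "\<dots> \<le> 2 / real i"
  proof -
    have "real (card ?Q) * real i \<le> 2^(i+1)"
      using cheb_count[OF assms] by (metis of_nat_le_iff of_nat_mult of_nat_numeral of_nat_power)
    then show ?thesis using assms by (simp add: field_simps)
  qed
  finally show ?thesis .
qed

lemma cheb_sum:
  "(\<Sum>p\<in>{p. prime p \<and> p \<le> 2^(n+1)}. 1 / real p) \<le> 1/2 + 2 * harm n"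
proof (induction n)
  case 0
  have "{p. prime p \<and> p \<le> (2::nat)} = {2}"
    using prime_ge_2_nat by (auto intro: antisym)
  then show ?case by (simp add: harm_def)
next
  case (Suc n)
  let ?A = "{p::nat. prime p \<and> p \<le> 2^(n+1)}"
  let ?Q = "{p::nat. prime p \<and> 2^(n+1) < p \<and> p \<le> 2^(n+1+1)}"
  have fA: "finite ?A" by (rule finite_subset[of _ "{..2^(n+1)}"]) auto
  have fQ: "finite ?Q" by (rule finite_subset[of _ "{..2^(n+1+1)}"]) auto
  have le: "(2::nat)^(n+1) \<le> 2^(Suc n+1)" by simp
  have "{p. prime p \<and> p \<le> 2^(Suc n+1)} = ?A \<union> ?Q"
    using le by (auto simp del: power_Suc intro: order_trans)
  then have "(\<Sum>p\<in>{p. prime p \<and> p \<le> 2^(Suc n+1)}. 1 / real p) = (\<Sum>p\<in>?A. 1 / real p) + (\<Sum>p\<in>?Q. 1 / real p)"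
    using fA fQ by (simp del: power_Suc add: sum.union_disjoint disjoint_iff)
  also have "\<dots> \<le> 1/2 + 2 * harm n + 2 / real (n+1)"
    using Suc.IH cheb_sum_dyadic[of "n+1"] by simp
  also have "\<dots> = 1/2 + 2 * harm (Suc n)"
    by (simp add: harm_Suc field_simps)
  finally show ?case .
qed

lemma harm_le_ln: "n \<ge> 1 \<Longrightarrow> harm n \<le> 1 + ln (real n)"
  using euler_mascheroni_sequence_decreasing[of 1 n] by (simp add: harm_def)

lemma sum_inv_sq_le:
  "N \<ge> 1 \<Longrightarrow> (\<Sum>i\<in>{2..N}. 1 / (real i)^2) \<le> 1 - 1 / real N"
proof (induction N rule: dec_induct)
  case base then show ?case by simp
next
  case (step N)
  have "{2..Suc N} = insert (Suc N) {2..N}" using step by auto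
  then have "(\<Sum>i\<in>{2..Suc N}. 1 / (real i)^2) = 1 / (real (Suc N))^2 + (\<Sum>i\<in>{2..N}. 1 / (real i)^2)"
    by simp
  also have "\<dots> \<le> 1 / (real (Suc N))^2 + (1 - 1 / real N)" using step by simp
  also have "\<dots> \<le> 1 - 1 / real (Suc N)"
  proof -
    have N: "real N \<ge> 1" using step by simp
    have e: "1 / real N - 1 / (real N + 1) = 1 / (real N * (real N + 1))"
      using N by (simp add: field_simps)
    have "1 / (real N + 1)^2 \<le> 1 / (real N * (real N + 1))"
      using N by (intro divide_left_mono) (auto simp: power2_eq_square)
    then have "1 / (real N + 1)^2 \<le> 1 / real N - 1 / (real N + 1)" using e by simp
    then show ?thesis by (simp add: add.commute)
  qed
  finally show ?case .
qed

lemma sum_primes_inv_sq: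
  assumes "finite P" "\<forall>p\<in>P. prime (p::nat)"
  shows "(\<Sum>p\<in>P. 1 / (real p)^2) \<le> 1"
proof -
  define N where "N = Max (insert 1 P)"
  have "P \<subseteq> {2..N}" using assms prime_ge_2_nat unfolding N_def by (auto intro: Max_ge)
  then have "(\<Sum>p\<in>P. 1 / (real p)^2) \<le> (\<Sum>i\<in>{2..N}. 1 / (real i)^2)"
    by (intro sum_mono2) auto
  also have "\<dots> \<le> 1 - 1 / real N" using sum_inv_sq_le[of N] assms unfolding N_def
    by (simp add: Max_ge_iff)
  also have "\<dots> \<le> 1" by simp
  finally show ?thesis .
qed



lemma exhaust_5':
  fixes x :: 5
  shows "x = 0 \<or> x = 1 \<or> x = 2 \<or> x = 3 \<or> x = 4"
proof (induct x)
  case (of_int z)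
  then have "z = 0 \<or> z = 1 \<or> z = 2 \<or> z = 3 \<or> z = 4" by fastforce
  then show ?case by auto
qed

lemma UNIV_5': "(UNIV::5 set) = {0,1,2,3,4}"
  using exhaust_5' by auto

lemma idx5_vals: "idx5 0 = 1" "idx5 1 = 2" "idx5 2 = 3" "idx5 3 = 4" "idx5 4 = 5"
  unfolding idx5_def by (simp_all add: bit1.Rep_numeral bit1.Rep_0 bit1.Rep_1)

lemma sum_UNIV_5: "(\<Sum>i\<in>(UNIV::5 set). f i) = f 0 + f 1 + f 2 + f 3 + f 4"
  unfolding UNIV_5' by (simp add: algebra_simps)

lemma sum_1_5: "(\<Sum>j=(1::nat)..5. f j) = f 1 + f 2 + f 3 + f 4 + f 5"
  by (simp add: numeral_eq_Suc algebra_simps)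

lemma idx5_range: "idx5 i \<in> {1..5}"
  using exhaust_5'[of i] by (auto simp: idx5_vals)

lemma idx5_inj: "inj idx5"
proof (rule injI)
  fix x y :: 5 assume "idx5 x = idx5 y"
  then have "nat (Rep_bit1 x) = nat (Rep_bit1 y)" by (simp add: idx5_def)
  moreover have "Rep_bit1 x \<ge> 0" "Rep_bit1 y \<ge> 0" using bit1.Rep_bit1 by auto
  ultimately have "Rep_bit1 x = Rep_bit1 y" by simp
  then show "x = y" by (simp add: bit1.Rep_bit1_inject)
qed

lemma idx5_surj: "j \<in> {1..5} \<Longrightarrow> \<exists>i. idx5 i = j"
proof -
  assume "j \<in> {1..5}"
  then have "j = 1 \<or> j = 2 \<or> j = 3 \<or> j = 4 \<or> j = 5" by auto
  then show ?thesis using idx5_vals by metis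
qed

definition xv :: "(nat \<Rightarrow> int) \<Rightarrow> real^5" where
  "xv v = (\<chi> i. real_of_int (v (idx5 i)))"

lemma hfun_M0: "real_of_int (hfun a (idx5 i) v) = 2 * (M0 a *v xv v) $ i"
proof -
  have "(M0 a *v xv v) $ i = (\<Sum>j\<in>UNIV. real_of_int (a (idx5 i) (idx5 j + 5)) * real_of_int (v (idx5 j)))"
    by (simp add: matrix_vector_mult_def M0_def xv_def)
  also have "\<dots> = (\<Sum>j=1..5. real_of_int (a (idx5 i) (j + 5)) * real_of_int (v j))"
    unfolding sum_1_5 sum_UNIV_5 idx5_vals by simp
  finally show ?thesis by (simp add: hfun_def sum_1_5)
qed


lemma det_Ints:
  fixes A :: "real^'n^'n"
  assumes "\<And>i j. A$i$j \<in> \<int>"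
  shows "det A \<in> \<int>"
  unfolding det_def using assms
  by (intro Ints_sum Ints_mult Ints_prod) auto

lemma M0_Ints: "M0 a $ i $ j \<in> \<int>"
  by (simp add: M0_def)

lemma M0_inv:
  assumes "rank (M0 a) = 5"
  shows "det (M0 a) \<noteq> 0" "\<exists>B. M0 a ** B = mat 1 \<and> B ** M0 a = mat 1"
proof -
  show d: "det (M0 a) \<noteq> 0" using assms det_eq_0_rank[of "M0 a"] by simp
  then show "\<exists>B. M0 a ** B = mat 1 \<and> B ** M0 a = mat 1"
    using invertible_det_nz[of "M0 a"] unfolding invertible_def by blast
qed

lemma M0_inj:
  assumes "rank (M0 a) = 5"
    and "\<forall>j. j \<notin> {1..5} \<longrightarrow> v j = 0" and "\<forall>j. j \<notin> {1..5} \<longrightarrow> v' j = 0"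
    and "\<forall>j\<in>{1..5}. hfun a j v = hfun a j v'"
  shows "v = v'"
proof -
  have "inj ((*v) (M0 a))" using assms(1) full_rank_injective[of "M0 a"] by simp
  moreover have "M0 a *v xv v = M0 a *v xv v'"
  proof (rule vec_eq_iff[THEN iffD2], rule allI)
    fix i
    have "real_of_int (hfun a (idx5 i) v) = real_of_int (hfun a (idx5 i) v')"
      using assms(4) idx5_range by simp
    then show "(M0 a *v xv v) $ i = (M0 a *v xv v') $ i" by (simp add: hfun_M0)
  qed
  ultimately have e: "xv v = xv v'" by (simp add: inj_def)
  show ?thesis
  proof
    fix j show "v j = v' j"
    proof (cases "j \<in> {1..5}")
      case True
      then obtain i where "idx5 i = j" using idx5_surj by blast
      then show ?thesis using e by (metis (no_types, lifting) of_int_eq_iff vec_lambda_beta xv_def)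
    next
      case False then show ?thesis using assms(2,3) by simp
    qed
  qed
qed

lemma key_lin:
  assumes "rank (M0 a) = 5" and "k \<in> {1..5}"
  shows "\<exists>m \<Delta> \<beta>. m \<in> {1..5} \<and> \<Delta> \<noteq> 0 \<and> \<beta> \<noteq> (0::int) \<and>
     (\<forall>v v'. (\<forall>j\<in>{1..5}-{m}. hfun a j v = hfun a j v') \<longrightarrow>
        2*\<Delta>*(v k - v' k) = \<beta>*(hfun a m v - hfun a m v'))"
proof -
  obtain \<kappa> where \<kappa>: "idx5 \<kappa> = k" using idx5_surj assms(2) by blast
  obtain B where B: "M0 a ** B = mat 1" "B ** M0 a = mat 1" using M0_inv[OF assms(1)] by blast
  have dnz: "det (M0 a) \<noteq> 0" using M0_inv[OF assms(1)] by blast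
  have "(B ** M0 a) $ \<kappa> $ \<kappa> = 1" using B by (simp add: mat_def)
  then have "(\<Sum>\<mu>\<in>UNIV. B $ \<kappa> $ \<mu> * M0 a $ \<mu> $ \<kappa>) = 1" by (simp add: matrix_matrix_mult_def)
  then obtain \<mu> where \<mu>: "B $ \<kappa> $ \<mu> \<noteq> 0"
    by (metis (mono_tags, lifting) mult_eq_0_iff sum.neutral zero_neq_one)
  define y where "y = B *v axis \<mu> 1"
  have My: "M0 a *v y = axis \<mu> 1"
    unfolding y_def by (simp add: matrix_vector_mul_assoc B)
  have yk: "y $ \<kappa> = B $ \<kappa> $ \<mu>"
  proof -
    have e: "\<And>j. B $ \<kappa> $ j * (if j = \<mu> then 1 else 0) = (if j = \<mu> then B $ \<kappa> $ \<mu> else 0)" by simp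
    show ?thesis unfolding y_def matrix_vector_mult_def axis_def by (simp add: e)
  qed
  have cr: "det (\<chi> i j. if j = \<kappa> then (M0 a *v y)$i else M0 a$i$j) = y$\<kappa> * det (M0 a)"
    by (rule cramer_lemma)
  have "det (\<chi> i j. if j = \<kappa> then (M0 a *v y)$i else M0 a$i$j) \<in> \<int>"
    by (rule det_Ints) (auto simp: My axis_def M0_Ints)
  then obtain \<beta> where \<beta>: "real_of_int \<beta> = B $ \<kappa> $ \<mu> * det (M0 a)"
    using cr yk by (metis Ints_cases)
  have "det (M0 a) \<in> \<int>" by (rule det_Ints) (simp add: M0_Ints)
  then obtain \<Delta> where \<Delta>: "real_of_int \<Delta> = det (M0 a)" by (metis Ints_cases)
  have bnz: "\<beta> \<noteq> 0" using \<beta> \<mu> dnz by auto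
  have Dnz: "\<Delta> \<noteq> 0" using \<Delta> dnz by auto
  have main: "2*\<Delta>*(v k - v' k) = \<beta>*(hfun a (idx5 \<mu>) v - hfun a (idx5 \<mu>) v')"
    if h: "\<forall>j\<in>{1..5}-{idx5 \<mu>}. hfun a j v = hfun a j v'" for v v'
  proof -
    define \<delta> where "\<delta> = real_of_int (hfun a (idx5 \<mu>) v - hfun a (idx5 \<mu>) v')"
    have "M0 a *v (xv v - xv v') = (\<delta>/2) *s axis \<mu> 1"
    proof (rule vec_eq_iff[THEN iffD2], rule allI)
      fix i
      have "(M0 a *v (xv v - xv v')) $ i = (M0 a *v xv v) $ i - (M0 a *v xv v') $ i"
        by (simp add: matrix_vector_mult_diff_distrib)
      also have "\<dots> = (real_of_int (hfun a (idx5 i) v) - real_of_int (hfun a (idx5 i) v'))/2"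
        by (simp add: hfun_M0)
      also have "\<dots> = ((\<delta>/2) *s axis \<mu> 1) $ i"
      proof (cases "i = \<mu>")
        case True then show ?thesis by (simp add: \<delta>_def axis_def)
      next
        case False
        then have "idx5 i \<noteq> idx5 \<mu>" using idx5_inj by (auto simp: inj_def)
        then have "hfun a (idx5 i) v = hfun a (idx5 i) v'" using h idx5_range by auto
        then show ?thesis using False by (simp add: axis_def)
      qed
      finally show "(M0 a *v (xv v - xv v')) $ i = ((\<delta>/2) *s axis \<mu> 1) $ i" .
    qed
    then have "B *v (M0 a *v (xv v - xv v')) = (\<delta>/2) *s y"
      by (simp add: y_def vector_scalar_commute)
    then have "xv v - xv v' = (\<delta>/2) *s y"
      by (simp add: matrix_vector_mul_assoc B)
    then have "(xv v - xv v') $ \<kappa> = (\<delta>/2) * B $ \<kappa> $ \<mu>" by (simp add: yk)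
    then have "real_of_int (v k) - real_of_int (v' k) = (\<delta>/2) * B $ \<kappa> $ \<mu>"
      by (simp add: xv_def \<kappa>)
    then have "det (M0 a) * (real_of_int (v k) - real_of_int (v' k)) = det (M0 a) * ((\<delta>/2) * B $ \<kappa> $ \<mu>)"
      by simp
    then have "real_of_int (2*\<Delta>*(v k - v' k)) = real_of_int (\<beta>*(hfun a (idx5 \<mu>) v - hfun a (idx5 \<mu>) v'))"
      by (simp add: \<beta> \<Delta> \<delta>_def algebra_simps)
    then show ?thesis by (simp only: of_int_eq_iff)
  qed
  show ?thesis
    using idx5_range[of \<mu>] Dnz bnz main by blast
qed



lemma rho_ge1: "rho n \<ge> 1"
  unfolding rho_def by (rule prod_ge_1) auto

lemma prod_le_sum_pow:
  fixes x :: "nat \<Rightarrow> real"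
  assumes "\<forall>j\<in>J. x j \<ge> 0" "finite J" "J \<noteq> {}"
  shows "(\<Prod>j\<in>J. x j) \<le> (\<Sum>j\<in>J. x j ^ card J)"
proof -
  define M where "M = Max (x ` J)"
  have "M \<in> x ` J" unfolding M_def using assms by (intro Max_in) auto
  then obtain j0 where j0: "j0 \<in> J" "x j0 = M" by auto
  have "(\<Prod>j\<in>J. x j) \<le> (\<Prod>j\<in>J. M)"
    by (rule prod_mono) (use assms in \<open>auto simp: M_def\<close>)
  also have "\<dots> = x j0 ^ card J" using j0 by simp
  also have "\<dots> \<le> (\<Sum>j\<in>J. x j ^ card J)"
    by (rule member_le_sum) (use assms j0 in auto)
  finally show ?thesis .
qed

lemma pow5_le: "0 \<le> x \<Longrightarrow> x \<le> 1 \<Longrightarrow> (1 + x::real) ^ 5 \<le> 1 + 31 * x"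
proof -
  assume x: "0 \<le> x" "x \<le> 1"
  have "x^2 \<le> x" "x^3 \<le> x" "x^4 \<le> x" "x^5 \<le> x"
    using x by (simp_all add: power_le_one mult_le_one power_le_one_iff
      power_decreasing[of 1 _ x, simplified])
  then show ?thesis by (simp add: power2_eq_square power3_eq_cube numeral_eq_Suc algebra_simps) 
qed


lemma rho5_trunc:
  fixes n :: int and X :: real and N :: nat
  assumes n0: "n \<noteq> 0" and nX: "real_of_int \<bar>n\<bar> < X" and XN: "ln X \<le> 2^N" and Xe: "exp 1 \<le> ln X"
  shows "rho n ^ 5 \<le> exp 5 * (\<Prod>p\<in>{p. prime p \<and> p \<le> 2^N} \<inter> prime_factors (nat \<bar>n\<bar>). 1 + 31 / real p)"
proof -
  let ?F = "prime_factors (nat \<bar>n\<bar>)"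
  let ?P = "{p::nat. prime p \<and> p \<le> 2^N}"
  define y :: real where "y = 2^N"
  have fF: "finite ?F" by simp
  have split: "rho n = (\<Prod>p\<in>?F \<inter> ?P. 1 + 1 / real p) * (\<Prod>p\<in>?F - ?P. 1 + 1 / real p)"
    unfolding rho_def using prod.Int_Diff[OF fF, of _ ?P] by simp
  have a: "(\<Prod>p\<in>?F \<inter> ?P. 1 + 1 / real p) ^ 5 \<le> (\<Prod>p\<in>?P \<inter> ?F. 1 + 31 / real p)"
  proof -
    have "(\<Prod>p\<in>?F \<inter> ?P. 1 + 1 / real p) ^ 5 = (\<Prod>p\<in>?F \<inter> ?P. (1 + 1 / real p) ^ 5)"
      by (rule prod_power_distrib)
    also have "\<dots> \<le> (\<Prod>p\<in>?F \<inter> ?P. 1 + 31 * (1 / real p))"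
    proof (rule prod_mono, safe)
      fix p assume "p \<in> ?F"
      then have "p \<ge> 1" using in_prime_factors_imp_prime prime_ge_1_nat by blast
      then show "(1 + 1 / real p) ^ 5 \<le> 1 + 31 * (1 / real p)" by (intro pow5_le) auto
    qed simp
    also have "\<dots> = (\<Prod>p\<in>?P \<inter> ?F. 1 + 31 / real p)" by (simp only: Int_commute[of ?F ?P] times_divide_eq_right mult_1_right)
    finally show ?thesis .
  qed
  have lnX1: "ln X \<ge> 1" using Xe exp_ge_add_one_self[of 1] by linarith
  have Xpos: "X > 0" using nX abs_ge_zero[of n] by linarith
  have ypos: "y > 0" unfolding y_def by simp
  have lny: "ln y \<ge> 1"
  proof -
    have "ln X > 0" using lnX1 by simp
    then have "ln (ln X) \<le> ln y" using XN unfolding y_def by simp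
    moreover have "ln (ln X) \<ge> 1" using Xe ln_le_cancel_iff[of "exp 1" "ln X"] lnX1 by simp
    ultimately show ?thesis by simp
  qed
  let ?Q = "?F - ?P"
  have fQ: "finite ?Q" using fF by simp
  have Qgt: "real p > y" if "p \<in> ?Q" for p
  proof -
    have "p > 2^N" using that in_prime_factors_imp_prime by auto
    then show ?thesis unfolding y_def by (metis of_nat_less_iff of_nat_numeral of_nat_power)
  qed
  have cardQ: "real (card ?Q) \<le> y"
  proof -
    have "\<forall>p\<in>?Q. prime p \<and> p dvd nat \<bar>n\<bar>"
      using in_prime_factors_imp_prime in_prime_factors_imp_dvd by blast
    then have "\<Prod>?Q dvd nat \<bar>n\<bar>"
      using prod_primes_dvd_nat[OF fQ] by blast
    moreover have "nat \<bar>n\<bar> > 0" using n0 by simp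
    ultimately have "\<Prod>?Q \<le> nat \<bar>n\<bar>" by (rule dvd_imp_le)
    then have "real (\<Prod>?Q) \<le> real_of_int \<bar>n\<bar>" by linarith
    moreover have "y ^ card ?Q \<le> real (\<Prod>?Q)"
    proof -
      have "(\<Prod>p\<in>?Q. y) \<le> (\<Prod>p\<in>?Q. real p)"
        using Qgt ypos by (intro prod_mono) (auto simp: less_imp_le)
      then show ?thesis by simp
    qed
    ultimately have "y ^ card ?Q < X" using nX by linarith
    then have "ln (y ^ card ?Q) < ln X" using ypos Xpos by (subst ln_less_cancel_iff) auto
    then have "real (card ?Q) * ln y < ln X" using ypos by (simp add: ln_realpow)
    then have "real (card ?Q) * ln y < y" using XN unfolding y_def by simp
    moreover have "real (card ?Q) \<le> real (card ?Q) * ln y" using lny by (simp add: mult_le_cancel_left1)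
    ultimately show ?thesis by simp
  qed
  have b: "(\<Prod>p\<in>?Q. 1 + 1 / real p) \<le> exp 1"
  proof -
    have "(\<Prod>p\<in>?Q. 1 + 1 / real p) \<le> exp (\<Sum>p\<in>?Q. 1 / real p)"
      by (rule prod_le_exp_sum) simp
    also have "(\<Sum>p\<in>?Q. 1 / real p) \<le> (\<Sum>p\<in>?Q. 1 / y)"
    proof (rule sum_mono)
      fix p assume "p \<in> ?Q"
      then have "y < real p" by (rule Qgt)
      then show "1 / real p \<le> 1 / y" using ypos by (simp add: frac_le)
    qed
    also have "\<dots> = real (card ?Q) / y" by simp
    also have "\<dots> \<le> 1" using cardQ ypos by simp
    finally show ?thesis by simp
  qed
  have b5: "(\<Prod>p\<in>?Q. 1 + 1 / real p) ^ 5 \<le> exp 5"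
  proof -
    have "(\<Prod>p\<in>?Q. 1 + 1 / real p) ^ 5 \<le> exp 1 ^ 5"
      using b by (intro power_mono) (auto intro: prod_nonneg)
    also have "exp 1 ^ 5 = exp (5::real)" by (simp add: exp_of_nat_mult[symmetric])
    finally show ?thesis .
  qed
  have "rho n ^ 5 = (\<Prod>p\<in>?F \<inter> ?P. 1 + 1 / real p) ^ 5 * (\<Prod>p\<in>?Q. 1 + 1 / real p) ^ 5"
    using split by (simp add: power_mult_distrib)
  also have "\<dots> \<le> (\<Prod>p\<in>?P \<inter> ?F. 1 + 31 / real p) * exp 5"
    using a b5 by (intro mult_mono) (auto intro: prod_nonneg)
  finally show ?thesis by (simp add: mult.commute)
qed



lemma spacing_card:
  fixes T :: "int set" and s :: int and R :: real
  assumes s: "s > 0" and R: "R \<ge> 0" and bd: "\<forall>x\<in>T. real_of_int \<bar>x\<bar> \<le> R"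
    and dv: "\<forall>x\<in>T. \<forall>y\<in>T. s dvd x - y"
  shows "real (card T) \<le> 2*R/s + 3"
proof -
  define K where "K = \<lfloor>R / s\<rfloor>"
  have inj: "inj_on (\<lambda>x. x div s) T"
  proof (rule inj_onI)
    fix x y assume x: "x \<in> T" and y: "y \<in> T" and e: "x div s = y div s"
    have "x mod s = y mod s" using dv x y by (simp add: mod_eq_dvd_iff)
    then show "x = y" using e by (metis div_mult_mod_eq)
  qed
  have sub: "(\<lambda>x. x div s) ` T \<subseteq> {-K-1..K}"
  proof
    fix z assume "z \<in> (\<lambda>x. x div s) ` T"
    then obtain x where x: "x \<in> T" "z = x div s" by auto
    have xe: "x = s * (x div s) + x mod s" by simp
    have m0: "0 \<le> x mod s" "x mod s < s" using s by simp_all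
    have xr: "real_of_int x = real_of_int s * real_of_int z + real_of_int (x mod s)"
      using xe x(2) by (metis of_int_add of_int_mult)
    have xb: "- R \<le> real_of_int x" "real_of_int x \<le> R" using bd x(1) by auto
    have sr: "real_of_int s > 0" using s by simp
    have "real_of_int s * real_of_int z \<le> R" using xr xb m0 by (smt (verit) of_int_nonneg)
    then have "real_of_int z \<le> R / s" using sr by (simp add: field_simps)
    then have u: "z \<le> K" unfolding K_def by (simp add: le_floor_iff)
    have "real_of_int s * real_of_int z > - R - real_of_int s" using xr xb m0
      by (smt (verit) of_int_less_iff)
    then have "real_of_int z > - R / s - 1" using sr by (simp add: field_simps)
    moreover have "R / s < real_of_int K + 1" unfolding K_def by linarith
    ultimately have "real_of_int z > real_of_int (-K - 2)" by simp
    then have "z \<ge> -K - 1" by linarith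
    with u show "z \<in> {-K-1..K}" by simp
  qed
  have "card T = card ((\<lambda>x. x div s) ` T)" using inj by (simp add: card_image)
  also have "\<dots> \<le> card {-K-1..K}" using sub by (intro card_mono) auto
  also have "\<dots> = nat (2*K + 2)" by simp
  finally have c: "card T \<le> nat (2*K+2)" .
  have K0: "K \<ge> 0" unfolding K_def using R s by simp
  have "real_of_int K \<le> R / s" unfolding K_def by simp
  then have "real (nat (2*K+2)) \<le> 2*R/s + 2" using K0 by simp
  then show ?thesis using c by (smt (verit) of_nat_le_iff)
qed

lemma Hset_finite: "finite (Hset a Y q c H)"
proof -
  define M where "M = \<lceil>Y\<rceil>"
  have "Hset a Y q c H \<subseteq> {f. \<forall>x. (x \<in> {1..5} \<longrightarrow> f x \<in> {-M..M}) \<and> (x \<notin> {1..5} \<longrightarrow> f x = 0)}"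
  proof safe
    fix v and x :: nat assume v: "v \<in> Hset a Y q c H" and x: "x \<in> {1..5}"
    then have "real_of_int \<bar>v x\<bar> < Y" unfolding Hset_def by auto
    then have "\<bar>v x\<bar> \<le> M" unfolding M_def by linarith
    then show "v x \<in> {-M..M}" by auto
  next
    fix v and x :: nat assume "v \<in> Hset a Y q c H" "x \<notin> {1..5}"
    then show "v x = 0" unfolding Hset_def by auto
  qed
  then show ?thesis by (rule finite_subset) (rule finite_set_of_finite_funs; simp)
qed


lemma count_fiber:
  fixes a :: "nat \<Rightarrow> nat \<Rightarrow> int" and k m :: nat and \<Delta> \<beta> :: int and A :: "nat set"
  assumes rank: "rank (M0 a) = 5"
    and m: "m \<in> {1..5}"
    and lin: "\<forall>v v'. (\<forall>j\<in>{1..5}-{m}. hfun a j v = hfun a j v') \<longrightarrow>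
        2*\<Delta>*(v k - v' k) = \<beta>*(hfun a m v - hfun a m v')"
    and q: "q > 0" and Hnn: "\<forall>i\<in>{1..5}. H i \<ge> 0"
    and A: "finite A" "\<forall>p\<in>A. prime p"
  shows "real (card {v\<in>Hset a Y q c H. \<forall>p\<in>A. int p dvd v k}) \<le>
     (\<Prod>j\<in>{1..5}-{m}. 4 * H j / q + 3) * (4 * H m / (q * \<Prod>{p\<in>A. \<not> int p dvd int q * \<beta>}) + 3)"
proof -
  let ?S = "{v\<in>Hset a Y q c H. \<forall>p\<in>A. int p dvd v k}"
  let ?J = "{1..5::nat}-{m}"
  let ?A' = "{p\<in>A. \<not> int p dvd int q * \<beta>}"
  define \<pi> where "\<pi> v = restrict (\<lambda>j. hfun a j v) ?J" for v
  define T where "T j = {w::int. real_of_int \<bar>w\<bar> \<le> 2 * H j \<and> w mod int q = c j mod int q}" for j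
  define F where "F = 4 * H m / (q * \<Prod>?A') + 3"
  have finS: "finite ?S" using Hset_finite by simp
  have fA': "finite ?A'" using A by simp
  have A'pos: "\<Prod>?A' > 0" using A prime_gt_0_nat by (auto intro: prod_pos)
  have F0: "F \<ge> 0"
  proof -
    have "H m \<ge> 0" using Hnn m by blast
    moreover have "real q * real (\<Prod>?A') > 0" using q A'pos by (metis of_nat_0_less_iff mult_pos_pos)
    ultimately have "4 * H m / (real q * real (\<Prod>?A')) \<ge> 0" by simp
    then show ?thesis unfolding F_def by simp
  qed
  have finT: "finite (T j)" for j
  proof -
    have "T j \<subseteq> {-\<lceil>2 * H j\<rceil>..\<lceil>2 * H j\<rceil>}" unfolding T_def by auto linarith+
    then show ?thesis by (rule finite_subset) simp
  qed
  have cardT: "real (card (T j)) \<le> 4 * H j / q + 3" if j: "j \<in> {1..5}" for j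
  proof -
    have "real (card (T j)) \<le> 2 * (2 * H j) / real_of_int (int q) + 3"
    proof (rule spacing_card)
      show "int q > 0" using q by simp
      show "2 * H j \<ge> 0" using Hnn j by simp
      show "\<forall>x\<in>T j. real_of_int \<bar>x\<bar> \<le> 2 * H j" unfolding T_def by auto
      show "\<forall>x\<in>T j. \<forall>y\<in>T j. int q dvd x - y" unfolding T_def
        by (metis (mono_tags, lifting) mem_Collect_eq mod_eq_dvd_iff)
    qed
    then show ?thesis by simp
  qed
  have img: "\<pi> ` ?S \<subseteq> PiE ?J T"
  proof
    fix f assume "f \<in> \<pi> ` ?S"
    then obtain v where v: "v \<in> ?S" "f = \<pi> v" by auto
    show "f \<in> PiE ?J T"
    proof (rule PiE_I)
      fix j assume j: "j \<in> ?J"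
      then have "j \<in> {1..5}" by simp
      then have "real_of_int \<bar>hfun a j v\<bar> \<le> 2 * H j \<and> hfun a j v mod int q = c j mod int q"
        using v(1) unfolding Hset_def by auto
      then show "f j \<in> T j" using v(2) j unfolding \<pi>_def T_def by simp
    next
      fix j assume "j \<notin> ?J" then show "f j = undefined" using v(2) unfolding \<pi>_def by (simp only: restrict_apply if_False) 
    qed
  qed
  have cardimg: "real (card (\<pi> ` ?S)) \<le> (\<Prod>j\<in>?J. 4 * H j / q + 3)"
  proof -
    have fP: "finite (PiE ?J T)" by (rule finite_PiE) (simp_all add: finT)
    have "card (\<pi> ` ?S) \<le> card (PiE ?J T)" by (rule card_mono[OF fP img])
    also have "\<dots> = (\<Prod>j\<in>?J. card (T j))" by (rule card_PiE) simp
    finally have c1: "card (\<pi> ` ?S) \<le> (\<Prod>j\<in>?J. card (T j))" .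
    have "real (card (\<pi> ` ?S)) \<le> real (\<Prod>j\<in>?J. card (T j))" using c1 by (simp only: of_nat_le_iff)
    also have "\<dots> = (\<Prod>j\<in>?J. real (card (T j)))" by (rule of_nat_prod)
    also have "\<dots> \<le> (\<Prod>j\<in>?J. 4 * H j / q + 3)"
      using cardT by (intro prod_mono) auto
    finally show ?thesis .
  qed
  have fiber: "real (card {v\<in>?S. \<pi> v = f}) \<le> F" for f
  proof -
    let ?Fb = "{v\<in>?S. \<pi> v = f}"
    have injm: "inj_on (\<lambda>v. hfun a m v) ?Fb"
    proof (rule inj_onI)
      fix v v' assume v: "v \<in> ?Fb" and v': "v' \<in> ?Fb" and e: "hfun a m v = hfun a m v'"
      have "\<forall>j\<in>{1..5}. hfun a j v = hfun a j v'"
      proof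
        fix j :: nat assume j: "j \<in> {1..5}"
        show "hfun a j v = hfun a j v'"
        proof (cases "j = m")
          case True then show ?thesis using e by simp
        next
          case False
          then have "j \<in> ?J" using j by simp
          moreover have "\<pi> v j = \<pi> v' j" using v v' by simp
          ultimately show ?thesis unfolding \<pi>_def by simp
        qed
      qed
      moreover have "\<forall>j. j \<notin> {1..5} \<longrightarrow> v j = 0" "\<forall>j. j \<notin> {1..5} \<longrightarrow> v' j = 0"
        using v v' unfolding Hset_def by auto
      ultimately show "v = v'" using M0_inj[OF rank] by blast
    qed
    have "real (card ?Fb) = real (card ((\<lambda>v. hfun a m v) ` ?Fb))" using injm by (simp add: card_image)
    also have "\<dots> \<le> 2 * (2 * H m) / real_of_int (int q * int (\<Prod>?A')) + 3"
    proof (rule spacing_card)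
      show "int q * int (\<Prod>?A') > 0" using q A'pos by (metis of_nat_0_less_iff mult_pos_pos)
      show "2 * H m \<ge> 0" using Hnn m by simp
      show "\<forall>x\<in>(\<lambda>v. hfun a m v) ` ?Fb. real_of_int \<bar>x\<bar> \<le> 2 * H m"
        using m unfolding Hset_def by auto
      show "\<forall>x\<in>(\<lambda>v. hfun a m v) ` ?Fb. \<forall>y\<in>(\<lambda>v. hfun a m v) ` ?Fb. int q * int (\<Prod>?A') dvd x - y"
      proof (intro ballI)
        fix x y assume "x \<in> (\<lambda>v. hfun a m v) ` ?Fb" "y \<in> (\<lambda>v. hfun a m v) ` ?Fb"
        then obtain v v' where v: "v \<in> ?Fb" "x = hfun a m v" and v': "v' \<in> ?Fb" "y = hfun a m v'" by auto
        have qd: "int q dvd x - y"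
        proof -
          have "hfun a m v mod int q = c m mod int q" "hfun a m v' mod int q = c m mod int q"
            using v v' m unfolding Hset_def by auto
          then show ?thesis using v v' by (simp add: mod_eq_dvd_iff[symmetric])
        qed
        have eqJ: "\<forall>j\<in>{1..5}-{m}. hfun a j v = hfun a j v'"
        proof
          fix j assume j: "j \<in> {1..5}-{m}"
          have "\<pi> v j = \<pi> v' j" using v v' by simp
          then show "hfun a j v = hfun a j v'" using j unfolding \<pi>_def by simp
        qed
        have key: "2*\<Delta>*(v k - v' k) = \<beta>*(x - y)" using lin eqJ v v' by blast
        have pd: "\<forall>p\<in>?A'. prime p \<and> int p dvd x - y"
        proof
          fix p assume p: "p \<in> ?A'"
          have pp: "prime p" using p A by auto
          then have ppi: "prime (int p)" by simp
          have "int p dvd v k" "int p dvd v' k" using p v v' by auto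
          then have "int p dvd 2*\<Delta>*(v k - v' k)" by (simp add: dvd_diff)
          then have "int p dvd \<beta>*(x - y)" using key by simp
          moreover have "\<not> int p dvd \<beta>" using p by (auto simp: dvd_mult)
          ultimately have "int p dvd x - y" using ppi prime_dvd_mult_iff by blast
          then show "prime p \<and> int p dvd x - y" using pp by simp
        qed
        have Ad: "int (\<Prod>?A') dvd x - y" using prod_primes_dvd_int[OF fA' pd] .
        have cop: "coprime (int q) (int (\<Prod>?A'))"
        proof -
          have "coprime q (\<Prod>?A')"
          proof (rule prod_coprime_right)
            fix p assume p: "p \<in> ?A'"
            have pp: "prime p" using p A by auto
            have "\<not> int p dvd int q" using p by (auto simp: dvd_mult2)
            then have "\<not> p dvd q" by simp
            then have "coprime p q" using prime_imp_coprime pp by blast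
            then show "coprime q p" by (simp add: coprime_commute)
          qed
          then show ?thesis by (simp only: coprime_int_iff)
        qed
        show "int q * int (\<Prod>?A') dvd x - y" using divides_mult[OF qd Ad cop] .
      qed
    qed
    also have "\<dots> = F" unfolding F_def by simp
    finally show ?thesis .
  qed
  have "card ?S = (\<Sum>f\<in>\<pi> ` ?S. card {v\<in>?S. \<pi> v = f})"
    unfolding card_eq_sum by (rule sum.image_gen[OF finS])
  then have "real (card ?S) = (\<Sum>f\<in>\<pi> ` ?S. real (card {v\<in>?S. \<pi> v = f}))" by simp
  also have "\<dots> \<le> (\<Sum>f\<in>\<pi> ` ?S. F)" using fiber by (intro sum_mono) auto
  also have "\<dots> = real (card (\<pi> ` ?S)) * F" by simp
  also have "\<dots> \<le> (\<Prod>j\<in>?J. 4 * H j / q + 3) * F" using cardimg F0 by (intro mult_right_mono) auto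
  finally show ?thesis unfolding F_def .
qed



lemma prod_subset_ge1:
  fixes f :: "'a \<Rightarrow> real"
  assumes "finite B" "A \<subseteq> B" "\<forall>x\<in>B. 1 \<le> f x"
  shows "prod f A \<le> prod f B"
proof -
  have "prod f B = prod f (B - A) * prod f A" using prod.subset_diff[OF assms(2,1)] by simp
  moreover have "prod f (B - A) \<ge> 1" using assms by (intro prod_ge_1) auto
  moreover have "prod f A \<ge> 0" using assms by (intro prod_nonneg) (auto intro: order_trans[OF zero_le_one])
  ultimately show ?thesis using mult_right_mono[of 1 "prod f (B - A)" "prod f A"] by simp
qed

lemma prod_union_ge1:
  fixes f :: "'a \<Rightarrow> real"
  assumes "finite A" "finite B" "\<forall>x\<in>A\<union>B. 1 \<le> f x"
  shows "prod f (A \<union> B) \<le> prod f A * prod f B"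
proof -
  have "prod f (A \<union> B) * prod f (A \<inter> B) = prod f A * prod f B"
    using prod.union_inter[OF assms(1,2)] by simp
  moreover have "prod f (A \<inter> B) \<ge> 1" using assms by (intro prod_ge_1) auto
  moreover have "prod f (A \<union> B) \<ge> 0" using assms by (intro prod_nonneg) (auto intro: order_trans[OF zero_le_one])
  ultimately show ?thesis using mult_left_mono[of 1 "prod f (A \<inter> B)" "prod f (A \<union> B)"] by simp
qed

lemma sum_pow_prod:
  fixes f :: "'a \<Rightarrow> real"
  assumes "finite P"
  shows "(\<Sum>A\<in>Pow P. \<Prod>p\<in>A. f p) = (\<Prod>p\<in>P. 1 + f p)"
  using prod_add[OF assms, of f "\<lambda>_. 1"] by (simp add: add.commute)


lemma E1:
  assumes Xe: "exp 1 \<le> ln X" and XN: "ln X \<le> 2^N" and YX: "Y \<le> X" and k: "k \<in> {1..5}"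
  shows "(\<Sum>v\<in>Hset a Y q c H. rho (v k) ^ 5) \<le>
    exp 5 * (\<Sum>A\<in>Pow {p. prime p \<and> p \<le> 2^N}. (\<Prod>p\<in>A. 31 / real p) *
       real (card {v\<in>Hset a Y q c H. \<forall>p\<in>A. int p dvd v k}))"
proof -
  let ?P = "{p::nat. prime p \<and> p \<le> 2^N}"
  let ?S = "Hset a Y q c H"
  define g where "g A = (\<Prod>p\<in>A. 31 / real p)" for A :: "nat set"
  have finP: "finite ?P" by (rule finite_subset[of _ "{..2^N}"]) auto
  have g0: "g A \<ge> 0" for A unfolding g_def by (intro prod_nonneg) auto
  have finS: "finite ?S" by (rule Hset_finite)
  have each: "rho (v k) ^ 5 \<le> exp 5 * (\<Sum>A\<in>Pow ?P. if \<forall>p\<in>A. int p dvd v k then g A else 0)"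
    if v: "v \<in> ?S" for v
  proof -
    let ?F = "prime_factors (nat \<bar>v k\<bar>)"
    have "0 < \<bar>v k\<bar> \<and> real_of_int \<bar>v k\<bar> < Y" using v k unfolding Hset_def by blast
    then have vk: "v k \<noteq> 0" "real_of_int \<bar>v k\<bar> < X" using YX by auto
    have "rho (v k) ^ 5 \<le> exp 5 * (\<Prod>p\<in>?P \<inter> ?F. 1 + 31 / real p)"
      by (rule rho5_trunc[OF vk XN Xe])
    also have "(\<Prod>p\<in>?P \<inter> ?F. 1 + 31 / real p) = (\<Sum>A\<in>Pow (?P \<inter> ?F). g A)"
      unfolding g_def by (rule sum_pow_prod[symmetric]) (simp add: finP)
    also have "\<dots> = (\<Sum>A\<in>Pow (?P \<inter> ?F). if \<forall>p\<in>A. int p dvd v k then g A else 0)"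
    proof (rule sum.cong[OF refl])
      fix A assume "A \<in> Pow (?P \<inter> ?F)"
      then have "\<forall>p\<in>A. int p dvd v k"
        by (auto dest!: in_prime_factors_imp_dvd subsetD)
      then show "g A = (if \<forall>p\<in>A. int p dvd v k then g A else 0)" by simp
    qed
    also have "\<dots> \<le> (\<Sum>A\<in>Pow ?P. if \<forall>p\<in>A. int p dvd v k then g A else 0)"
      by (rule sum_mono2) (auto simp: finP g0)
    finally show ?thesis by simp
  qed
  have "(\<Sum>v\<in>?S. rho (v k) ^ 5) \<le> (\<Sum>v\<in>?S. exp 5 * (\<Sum>A\<in>Pow ?P. if \<forall>p\<in>A. int p dvd v k then g A else 0))"
    by (rule sum_mono) (rule each)
  also have "\<dots> = exp 5 * (\<Sum>A\<in>Pow ?P. \<Sum>v\<in>?S. if \<forall>p\<in>A. int p dvd v k then g A else 0)"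
    by (simp add: sum_distrib_left[symmetric] sum.swap[of _ ?S])
  also have "\<dots> = exp 5 * (\<Sum>A\<in>Pow ?P. g A * real (card {v\<in>?S. \<forall>p\<in>A. int p dvd v k}))"
  proof -
    have "(\<Sum>v\<in>?S. if \<forall>p\<in>A. int p dvd v k then g A else 0) = g A * real (card {v\<in>?S. \<forall>p\<in>A. int p dvd v k})" for A
      using sum.inter_filter[OF finS, of "\<lambda>_. g A" "\<lambda>v. \<forall>p\<in>A. int p dvd v k", symmetric] by simp
    then show ?thesis by simp
  qed
  finally show ?thesis unfolding g_def .
qed


lemma E2:
  fixes P :: "nat set" and \<beta> :: int
  assumes finP: "finite P" and Pp: "\<forall>p\<in>P. prime p" and q: "q > 0" and b: "\<beta> \<noteq> 0"
  shows "(\<Sum>A\<in>Pow P. (\<Prod>p\<in>A. 31 / real p) / real (\<Prod>{p\<in>A. \<not> int p dvd int q * \<beta>}))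
     \<le> exp 31 * 16 ^ 31 * (\<Prod>p\<in>prime_factors (nat \<bar>\<beta>\<bar>). 1 + 31 / real p) * real (tau q)"
proof -
  define cnd where "cnd p = (int p dvd int q * \<beta>)" for p
  define f where "f p = 31 / real p / (if \<not> cnd p then real p else 1)" for p
  define C\<beta> where "C\<beta> = (\<Prod>p\<in>prime_factors (nat \<bar>\<beta>\<bar>). 1 + 31 / real p)"
  have pos: "real p > 0" if "p \<in> P" for p using Pp that prime_gt_0_nat by auto
  have eqA: "(\<Prod>p\<in>A. 31 / real p) / real (\<Prod>{p\<in>A. \<not> int p dvd int q * \<beta>}) = (\<Prod>p\<in>A. f p)"
    if A: "A \<in> Pow P" for A
  proof -
    have fA: "finite A" using A finP finite_subset by auto
    have "real (\<Prod>{p\<in>A. \<not> int p dvd int q * \<beta>}) = (\<Prod>p\<in>{p\<in>A. \<not> cnd p}. real p)"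
      unfolding cnd_def by simp
    also have "\<dots> = (\<Prod>p\<in>A. if \<not> cnd p then real p else 1)"
      by (rule prod.inter_filter[OF fA])
    finally have e: "real (\<Prod>{p\<in>A. \<not> int p dvd int q * \<beta>}) = (\<Prod>p\<in>A. if \<not> cnd p then real p else 1)" .
    show ?thesis unfolding e f_def by (simp add: prod_dividef prod.distrib)
  qed
  have "(\<Sum>A\<in>Pow P. (\<Prod>p\<in>A. 31 / real p) / real (\<Prod>{p\<in>A. \<not> int p dvd int q * \<beta>}))
      = (\<Sum>A\<in>Pow P. \<Prod>p\<in>A. f p)" by (rule sum.cong[OF refl]) (rule eqA)
  also have "\<dots> = (\<Prod>p\<in>P. 1 + f p)" by (rule sum_pow_prod[OF finP])
  also have "\<dots> \<le> (\<Prod>p\<in>P. (1 + 31 * (1 / (real p)^2)) * (if cnd p then 1 + 31 / real p else 1))"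
  proof (rule prod_mono, safe)
    fix p assume p: "p \<in> P"
    have pp: "real p > 0" using pos p by simp
    have f0: "f p \<ge> 0" unfolding f_def using pp by simp
    then show "0 \<le> 1 + f p" by simp
    show "1 + f p \<le> (1 + 31 * (1 / (real p)^2)) * (if cnd p then 1 + 31 / real p else 1)"
    proof (cases "cnd p")
      case True
      then have "f p = 31 / real p" unfolding f_def by simp
      moreover have "0 \<le> 31 * (1 / (real p)^2) * (1 + 31 / real p)" using pp by simp
      ultimately show ?thesis using True by (simp add: algebra_simps)
    next
      case False
      then show ?thesis unfolding f_def by (simp add: power2_eq_square)
    qed
  qed
  also have "\<dots> = (\<Prod>p\<in>P. 1 + 31 * (1 / (real p)^2)) * (\<Prod>p\<in>P. if cnd p then 1 + 31 / real p else 1)"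
    by (rule prod.distrib)
  also have "\<dots> \<le> exp 31 * (16 ^ 31 * real (tau q) * C\<beta>)"
  proof (rule mult_mono)
    have "(\<Prod>p\<in>P. 1 + 31 * (1 / (real p)^2)) \<le> exp (\<Sum>p\<in>P. 31 * (1 / (real p)^2))"
      by (rule prod_le_exp_sum) simp
    also have "(\<Sum>p\<in>P. 31 * (1 / (real p)^2)) = 31 * (\<Sum>p\<in>P. 1 / (real p)^2)"
      by (simp add: sum_distrib_left)
    also have "\<dots> \<le> 31" using sum_primes_inv_sq[OF finP Pp] by simp
    finally show "(\<Prod>p\<in>P. 1 + 31 * (1 / (real p)^2)) \<le> exp 31" by simp
    show "(\<Prod>p\<in>P. if cnd p then 1 + 31 / real p else 1) \<le> 16 ^ 31 * real (tau q) * C\<beta>"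
    proof -
      have "(\<Prod>p\<in>P. if cnd p then 1 + 31 / real p else 1) = (\<Prod>p\<in>{p\<in>P. cnd p}. 1 + 31 / real p)"
        by (rule prod.inter_filter[OF finP, symmetric])
      also have "\<dots> \<le> (\<Prod>p\<in>prime_factors q \<union> prime_factors (nat \<bar>\<beta>\<bar>). 1 + 31 / real p)"
      proof (rule prod_subset_ge1)
        show "finite (prime_factors q \<union> prime_factors (nat \<bar>\<beta>\<bar>))" by simp
        show "\<forall>x\<in>prime_factors q \<union> prime_factors (nat \<bar>\<beta>\<bar>). 1 \<le> 1 + 31 / real x" by simp
        show "{p \<in> P. cnd p} \<subseteq> prime_factors q \<union> prime_factors (nat \<bar>\<beta>\<bar>)"
        proof
          fix p assume p: "p \<in> {p \<in> P. cnd p}"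
          then have pp: "prime p" using Pp by auto
          then have ppi: "prime (int p)" by simp
          have "int p dvd int q * \<beta>" using p unfolding cnd_def by simp
          then have "int p dvd int q \<or> int p dvd \<beta>" using ppi prime_dvd_mult_iff by blast
          then show "p \<in> prime_factors q \<union> prime_factors (nat \<bar>\<beta>\<bar>)"
          proof
            assume "int p dvd int q"
            then have "p dvd q" by simp
            then show ?thesis using pp q by (simp add: in_prime_factors_iff)
          next
            assume "int p dvd \<beta>"
            then have "int p dvd int (nat \<bar>\<beta>\<bar>)" by simp
            then have "p dvd nat \<bar>\<beta>\<bar>" by (simp only: int_dvd_int_iff)
            then show ?thesis using pp b by (simp add: in_prime_factors_iff)
          qed
        qed
      qed
      also have "\<dots> \<le> (\<Prod>p\<in>prime_factors q. 1 + 31 / real p) * C\<beta>"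
        unfolding C\<beta>_def by (rule prod_union_ge1) auto
      also have "\<dots> \<le> (16 ^ 31 * 2 ^ card (prime_factors q)) * C\<beta>"
        by (rule mult_right_mono[OF prod_pf_31]) (auto simp: C\<beta>_def intro: prod_nonneg)
      also have "\<dots> \<le> (16 ^ 31 * real (tau q)) * C\<beta>"
      proof -
        have "(2::real) ^ card (prime_factors q) \<le> real (tau q)"
          using two_pow_card_le_tau[OF q] by (metis of_nat_le_iff of_nat_numeral of_nat_power)
        then show ?thesis by (intro mult_right_mono) (auto simp: C\<beta>_def intro: prod_nonneg)
      qed
      finally show ?thesis by simp
    qed
    show "0 \<le> (\<Prod>p\<in>P. if cnd p then 1 + 31 / real p else 1)" by (intro prod_nonneg) auto
    show "0 \<le> exp (31::real)" by simp
  qed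
  also have "\<dots> = exp 31 * 16 ^ 31 * C\<beta> * real (tau q)"
    by (simp only: mult.assoc mult.commute mult.left_commute)
  finally show ?thesis unfolding C\<beta>_def .
qed


lemma E3:
  fixes H :: "nat \<Rightarrow> real" and L D :: real and q :: nat
  assumes m: "m \<in> {1..5}" and L: "L \<ge> 1" and q: "q > 0" and H: "\<forall>i\<in>{1..5}. H i \<ge> real q * L"
    and D: "D > 0"
  shows "(\<Prod>j\<in>{1..5}-{m}. 4 * H j / q + 3) * (4 * H m / (q * D) + 3)
     \<le> 7^4 * ((\<Prod>i=1..5. H i) / real q ^ 5) * (4 / D + 3 / L)"
proof -
  have qp: "real q > 0" using q by simp
  have Hq: "H i / q \<ge> L" if "i \<in> {1..5}" for i
    using H that qp by (simp add: field_simps)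
  have c1: "(\<Prod>j\<in>{1..5}-{m}. 4 * H j / q + 3) \<le> (\<Prod>j\<in>{1..5}-{m}. 7 * (H j / q))"
  proof (rule prod_mono, safe)
    fix j assume j: "j \<in> {1..5::nat}" "j \<noteq> m"
    have "H j / q \<ge> 1" using Hq[OF j(1)] L by simp
    then show "0 \<le> 4 * H j / q + 3" "4 * H j / q + 3 \<le> 7 * (H j / q)" by simp_all
  qed
  also have "\<dots> = 7^4 * (\<Prod>j\<in>{1..5}-{m}. H j / q)"
  proof -
    have "card ({1..5::nat}-{m}) = 4" using m by simp
    then show ?thesis by (subst prod.distrib) simp
  qed
  finally have c1: "(\<Prod>j\<in>{1..5}-{m}. 4 * H j / q + 3) \<le> 7^4 * (\<Prod>j\<in>{1..5}-{m}. H j / q)" .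
  have c2: "4 * H m / (q * D) + 3 \<le> (H m / q) * (4 / D + 3 / L)"
  proof -
    have "(H m / q) / L \<ge> 1" using Hq[OF m] L by (subst le_divide_eq_1_pos) auto
    then have "3 \<le> 3 * ((H m / q) / L)" by simp
    also have "\<dots> = (H m / q) * (3 / L)" by simp
    finally have "3 \<le> (H m / q) * (3 / L)" .
    moreover have "4 * H m / (q * D) = (H m / q) * (4 / D)" by simp
    ultimately show ?thesis by (simp add: distrib_left mult.commute)
  qed
  have Hq0: "H j / q \<ge> 0" if "j \<in> {1..5}" for j using Hq[OF that] L by simp
  have p0: "0 \<le> (\<Prod>j\<in>{1..5}-{m}. 4 * H j / q + 3)"
  proof (rule prod_nonneg)
    fix j assume "j \<in> {1..5::nat}-{m}"
    then have "H j / q \<ge> 0" using Hq0 by simp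
    then show "0 \<le> 4 * H j / q + 3" by simp
  qed
  have "(\<Prod>j\<in>{1..5}-{m}. 4 * H j / q + 3) * (4 * H m / (q * D) + 3)
      \<le> (7^4 * (\<Prod>j\<in>{1..5}-{m}. H j / q)) * ((H m / q) * (4 / D + 3 / L))"
  proof (rule mult_mono[OF c1 c2])
    have "(\<Prod>j\<in>{1..5}-{m}. H j / q) \<ge> 0" using Hq0 by (intro prod_nonneg) simp
    then show "0 \<le> 7^4 * (\<Prod>j\<in>{1..5}-{m}. H j / q)" by simp
    have "H m / q \<ge> 0" using Hq0 m by simp
    moreover have "D > 0" using D by simp
    ultimately have "(H m / q) * (4 / D) \<ge> 0" by (intro mult_nonneg_nonneg) simp_all
    moreover have "4 * H m / (q * D) = (H m / q) * (4 / D)" by simp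
    ultimately have "4 * H m / (q * D) \<ge> 0" by linarith
    then show "0 \<le> 4 * H m / (q * D) + 3" by simp
  qed
  also have "\<dots> = 7^4 * ((\<Prod>j\<in>{1..5}-{m}. H j / q) * (H m / q)) * (4 / D + 3 / L)"
    by (simp add: mult_ac)
  also have "(\<Prod>j\<in>{1..5}-{m}. H j / q) * (H m / q) = (\<Prod>i=1..5. H i / q)"
    using prod.remove[of "{1..5::nat}" m "\<lambda>i. H i / q"] m by (simp add: mult.commute)
  also have "(\<Prod>i=1..5. H i / q) = (\<Prod>i=1..5. H i) / real q ^ 5"
    by (simp add: prod_dividef)
  finally show ?thesis .
qed


lemma per_k:
  assumes rank: "rank (M0 a) = 5" and k: "k \<in> {1..5}"
  shows "\<exists>C. \<forall>X Y (q::nat) (c::nat \<Rightarrow> int) (H::nat \<Rightarrow> real) (N::nat).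
     exp 1 \<le> ln X \<longrightarrow> ln X \<le> 2^N \<longrightarrow>
     (\<Prod>p\<in>{p. prime p \<and> p \<le> 2^N}. 1 + 31 / real p) \<le> ln X \<longrightarrow>
     Y \<le> X \<longrightarrow> q > 0 \<longrightarrow> (\<forall>i\<in>{1..5}. H i > 0 \<and> H i \<ge> real q * ln X) \<longrightarrow>
     (\<Sum>v\<in>Hset a Y q c H. rho (v k) ^ 5) \<le> C * (\<Prod>i=1..5. H i) / real q ^ 5 * real (tau q)"
proof -
  obtain m \<Delta> \<beta> where m: "m \<in> {1..5}" and Dnz: "\<Delta> \<noteq> 0" and bnz: "\<beta> \<noteq> (0::int)"
    and lin: "\<forall>v v'. (\<forall>j\<in>{1..5}-{m}. hfun a j v = hfun a j v') \<longrightarrow>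
        2*\<Delta>*(v k - v' k) = \<beta>*(hfun a m v - hfun a m v')"
    using key_lin[OF rank k] by blast
  define C\<beta> where "C\<beta> = (\<Prod>p\<in>prime_factors (nat \<bar>\<beta>\<bar>). 1 + 31 / real p)"
  define K0 where "K0 = exp 31 * 16 ^ 31 * C\<beta>"
  have K0: "K0 \<ge> 0" unfolding K0_def C\<beta>_def by (intro mult_nonneg_nonneg prod_nonneg) auto
  show ?thesis
  proof (rule exI[of _ "exp 5 * 7^4 * (4 * K0 + 3)"], intro allI impI)
    fix X Y :: real and q :: nat and c :: "nat \<Rightarrow> int" and H :: "nat \<Rightarrow> real" and N :: nat
    assume Xe: "exp 1 \<le> ln X" and XN: "ln X \<le> 2^N"
      and PX: "(\<Prod>p\<in>{p. prime p \<and> p \<le> 2^N}. 1 + 31 / real p) \<le> ln X"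
      and YX: "Y \<le> X" and q: "q > 0" and H: "\<forall>i\<in>{1..5}. H i > 0 \<and> H i \<ge> real q * ln X"
    let ?P = "{p::nat. prime p \<and> p \<le> 2^N}"
    let ?S = "Hset a Y q c H"
    define g where "g A = (\<Prod>p\<in>A. 31 / real p)" for A :: "nat set"
    define A' where "A' A = {p\<in>A. \<not> int p dvd int q * \<beta>}" for A :: "nat set"
    define Hq where "Hq = (\<Prod>i=1..5. H i) / real q ^ 5"
    define L where "L = ln X"
    have L1: "L \<ge> 1" unfolding L_def using Xe exp_ge_add_one_self[of 1] by linarith
    have finP: "finite ?P" by (rule finite_subset[of _ "{..2^N}"]) auto
    have Pp: "\<forall>p\<in>?P. prime p" by simp
    have g0: "g A \<ge> 0" for A unfolding g_def by (intro prod_nonneg) auto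
    have Hq0: "Hq \<ge> 0" unfolding Hq_def using H by (intro divide_nonneg_nonneg prod_nonneg) (auto intro: less_imp_le)
    have Hnn: "\<forall>i\<in>{1..5}. H i \<ge> 0" using H by (auto intro: less_imp_le)
    have HL: "\<forall>i\<in>{1..5}. H i \<ge> real q * L" using H unfolding L_def by blast
    have cardA: "real (card {v\<in>?S. \<forall>p\<in>A. int p dvd v k}) \<le> 7^4 * Hq * (4 / real (\<Prod>(A' A)) + 3 / L)"
      if A: "A \<in> Pow ?P" for A
    proof -
      have fA: "finite A" using A finP by (auto intro: finite_subset)
      have pA: "\<forall>p\<in>A. prime p" using A by auto
      have D: "real (\<Prod>(A' A)) > 0" unfolding A'_def using pA prime_gt_0_nat
        by (metis (no_types, lifting) mem_Collect_eq of_nat_0_less_iff prod_pos)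
      have "real (card {v\<in>?S. \<forall>p\<in>A. int p dvd v k}) \<le>
         (\<Prod>j\<in>{1..5}-{m}. 4 * H j / q + 3) * (4 * H m / (q * \<Prod>(A' A)) + 3)"
        unfolding A'_def by (rule count_fiber[OF rank m lin q Hnn fA pA])
      also have "\<dots> \<le> 7^4 * Hq * (4 / real (\<Prod>(A' A)) + 3 / L)"
        unfolding Hq_def using E3[OF m L1 q HL D] by simp
      finally show ?thesis .
    qed
    have "(\<Sum>v\<in>?S. rho (v k) ^ 5) \<le> exp 5 * (\<Sum>A\<in>Pow ?P. g A * real (card {v\<in>?S. \<forall>p\<in>A. int p dvd v k}))"
      unfolding g_def by (rule E1[OF Xe XN YX k])
    also have "\<dots> \<le> exp 5 * (\<Sum>A\<in>Pow ?P. g A * (7^4 * Hq * (4 / real (\<Prod>(A' A)) + 3 / L)))"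
      using cardA g0 by (intro mult_left_mono sum_mono) auto
    also have "(\<Sum>A\<in>Pow ?P. g A * (7^4 * Hq * (4 / real (\<Prod>(A' A)) + 3 / L)))
       = 7^4 * Hq * (4 * (\<Sum>A\<in>Pow ?P. g A / real (\<Prod>(A' A))) + 3 / L * (\<Sum>A\<in>Pow ?P. g A))"
      by (simp add: sum_distrib_left sum.distrib algebra_simps)
    also have "\<dots> \<le> 7^4 * Hq * (4 * (K0 * real (tau q)) + 3)"
    proof (rule mult_left_mono)
      have s1: "(\<Sum>A\<in>Pow ?P. g A / real (\<Prod>(A' A))) \<le> K0 * real (tau q)"
        unfolding g_def A'_def K0_def C\<beta>_def using E2[OF finP Pp q bnz] by simp
      have "(\<Sum>A\<in>Pow ?P. g A) = (\<Prod>p\<in>?P. 1 + 31 / real p)"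
        unfolding g_def by (rule sum_pow_prod[OF finP])
      then have "(\<Sum>A\<in>Pow ?P. g A) \<le> L" using PX unfolding L_def by simp
      then have s2: "3 / L * (\<Sum>A\<in>Pow ?P. g A) \<le> 3" using L1 by (simp add: field_simps)
      show "4 * (\<Sum>A\<in>Pow ?P. g A / real (\<Prod>(A' A))) + 3 / L * (\<Sum>A\<in>Pow ?P. g A) \<le> 4 * (K0 * real (tau q)) + 3"
        using s1 s2 by simp
      show "0 \<le> 7^4 * Hq" using Hq0 by simp
    qed
    also have "\<dots> \<le> 7^4 * Hq * ((4 * K0 + 3) * real (tau q))"
    proof (rule mult_left_mono)
      have "tau q \<ge> 1" using two_pow_card_le_tau[OF q] by (metis le_trans one_le_numeral one_le_power)
      then show "4 * (K0 * real (tau q)) + 3 \<le> (4 * K0 + 3) * real (tau q)" by (simp add: algebra_simps)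
      show "0 \<le> 7^4 * Hq" using Hq0 by simp
    qed
    finally have "(\<Sum>v\<in>?S. rho (v k) ^ 5) \<le> exp 5 * (7^4 * Hq * ((4 * K0 + 3) * real (tau q)))"
      by (simp add: mult_left_mono)
    then show "(\<Sum>v\<in>?S. rho (v k) ^ 5) \<le> exp 5 * 7^4 * (4 * K0 + 3) * (\<Prod>i=1..5. H i) / real q ^ 5 * real (tau q)"
      unfolding Hq_def by (simp add: algebra_simps)
  qed
qed



lemma prime_prod_bound:
  fixes X :: real
  assumes Xe: "exp 1 \<le> ln X" and big: "exp (155/2) * (log 2 (ln X) + 1)^62 \<le> ln X"
  defines "N \<equiv> nat \<lceil>log 2 (ln X)\<rceil>"
  shows "ln X \<le> 2^N" "(\<Prod>p\<in>{p. prime p \<and> p \<le> 2^N}. 1 + 31 / real p) \<le> ln X"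
proof -
  have L2: "ln X \<ge> 2" using Xe exp_ge_add_one_self[of 1] by linarith
  have lg1: "log 2 (ln X) \<ge> 1" using L2 by simp
  have Nge: "real N \<ge> log 2 (ln X)" unfolding N_def by linarith
  have Nle: "real N \<le> log 2 (ln X) + 1" unfolding N_def using lg1 by linarith
  have N1: "N \<ge> 1" using Nge lg1 by linarith
  have "ln X = 2 powr (log 2 (ln X))" using L2 by simp
  also have "\<dots> \<le> 2 powr (real N)" using Nge by (intro powr_mono) auto
  also have "\<dots> = 2^N" by (simp add: powr_realpow)
  finally show "ln X \<le> 2^N" .
  let ?P = "{p::nat. prime p \<and> p \<le> 2^N}"
  let ?P' = "{p::nat. prime p \<and> p \<le> 2^(N+1)}"
  have finP': "finite ?P'" by (rule finite_subset[of _ "{..2^(N+1)}"]) auto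
  have sub: "?P \<subseteq> ?P'"
  proof -
    have "(2::nat)^N \<le> 2^(N+1)" by simp
    then show ?thesis by (auto intro: order_trans)
  qed
  have "(\<Prod>p\<in>?P. 1 + 31 / real p) \<le> exp (\<Sum>p\<in>?P. 31 / real p)"
    by (rule prod_le_exp_sum) simp
  also have "(\<Sum>p\<in>?P. 31 / real p) = 31 * (\<Sum>p\<in>?P. 1 / real p)" by (simp add: sum_distrib_left)
  also have "(\<Sum>p\<in>?P. 1 / real p) \<le> (\<Sum>p\<in>?P'. 1 / real p)"
    by (rule sum_mono2[OF finP' sub]) simp
  also have "\<dots> \<le> 1/2 + 2 * harm N" by (rule cheb_sum)
  also have "\<dots> \<le> 1/2 + 2 * (1 + ln (real N))" using harm_le_ln[OF N1] by simp
  finally have "(\<Prod>p\<in>?P. 1 + 31 / real p) \<le> exp (31 * (1/2 + 2 * (1 + ln (real N))))"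
    by simp
  also have "exp (31 * (1/2 + 2 * (1 + ln (real N)))) = exp (155/2) * exp (ln (real N ^ 62))"
    using N1 by (simp add: ln_realpow algebra_simps exp_add[symmetric])
  also have "\<dots> = exp (155/2) * real N ^ 62" using N1 by simp
  also have "\<dots> \<le> exp (155/2) * (log 2 (ln X) + 1)^62"
    using Nle by (intro mult_left_mono power_mono) auto
  also have "\<dots> \<le> ln X" by (rule big)
  finally show "(\<Prod>p\<in>?P. 1 + 31 / real p) \<le> ln X" .
qed


theorem lemma5p2:
  fixes s :: nat and a :: "nat \<Rightarrow> nat \<Rightarrow> int"
  assumes "s \<ge> 10"
    and "\<forall>i\<in>{1..s}. \<forall>j\<in>{1..s}. a i j = a j i"
    and "rank (M0 a) = 5"
  shows "\<exists>C X0. \<forall>X Y (q::nat) (c::nat \<Rightarrow> int) (H::nat \<Rightarrow> real).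
           X \<ge> X0 \<longrightarrow> 1 \<le> Y \<longrightarrow> Y \<le> X \<longrightarrow> q > 0 \<longrightarrow>
           (\<forall>i\<in>{1..5}. H i > 0 \<and> H i \<ge> real q * ln X) \<longrightarrow>
           Hsum a Y q c H \<le> C * (\<Prod>i=1..5. H i) / real q ^ 5 * real (tau q)"
proof -
  have rank: "rank (M0 a) = 5" by (rule assms(3))
  have "\<forall>k\<in>{1..5::nat}. \<exists>C. \<forall>X Y (q::nat) (c::nat \<Rightarrow> int) (H::nat \<Rightarrow> real) (N::nat).
     exp 1 \<le> ln X \<longrightarrow> ln X \<le> 2^N \<longrightarrow>
     (\<Prod>p\<in>{p. prime p \<and> p \<le> 2^N}. 1 + 31 / real p) \<le> ln X \<longrightarrow>
     Y \<le> X \<longrightarrow> q > 0 \<longrightarrow> (\<forall>i\<in>{1..5}. H i > 0 \<and> H i \<ge> real q * ln X) \<longrightarrow>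
     (\<Sum>v\<in>Hset a Y q c H. rho (v k) ^ 5) \<le> C * (\<Prod>i=1..5. H i) / real q ^ 5 * real (tau q)"
    using per_k[OF rank] by blast
  then obtain Cf where Cf: "\<forall>k\<in>{1..5::nat}. \<forall>X Y (q::nat) (c::nat \<Rightarrow> int) (H::nat \<Rightarrow> real) (N::nat).
     exp 1 \<le> ln X \<longrightarrow> ln X \<le> 2^N \<longrightarrow>
     (\<Prod>p\<in>{p. prime p \<and> p \<le> 2^N}. 1 + 31 / real p) \<le> ln X \<longrightarrow>
     Y \<le> X \<longrightarrow> q > 0 \<longrightarrow> (\<forall>i\<in>{1..5}. H i > 0 \<and> H i \<ge> real q * ln X) \<longrightarrow>
     (\<Sum>v\<in>Hset a Y q c H. rho (v k) ^ 5) \<le> Cf k * (\<Prod>i=1..5. H i) / real q ^ 5 * real (tau q)"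
    by (rule bchoice[THEN exE]) blast
  have e1: "eventually (\<lambda>X::real. exp 1 \<le> ln X) at_top" by real_asymp
  have e2: "eventually (\<lambda>X::real. exp (155/2) * (log 2 (ln X) + 1)^62 \<le> ln X) at_top" by real_asymp
  have ev: "eventually (\<lambda>X::real. exp 1 \<le> ln X \<and> exp (155/2) * (log 2 (ln X) + 1)^62 \<le> ln X) at_top"
    using eventually_conj[OF e1 e2] .
  then obtain X0 where X0: "\<forall>X\<ge>X0. exp 1 \<le> ln X \<and> exp (155/2) * (log 2 (ln X) + 1)^62 \<le> ln X"
    by (auto simp: eventually_at_top_linorder)
  show ?thesis
  proof (rule exI[of _ "\<Sum>k=1..5. Cf k"], rule exI[of _ X0], intro allI impI)
    fix X Y :: real and q :: nat and c :: "nat \<Rightarrow> int" and H :: "nat \<Rightarrow> real"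
    assume XX0: "X \<ge> X0" and Y1: "1 \<le> Y" and YX: "Y \<le> X" and q: "q > 0"
      and H: "\<forall>i\<in>{1..5}. H i > 0 \<and> H i \<ge> real q * ln X"
    have Xe: "exp 1 \<le> ln X" and big: "exp (155/2) * (log 2 (ln X) + 1)^62 \<le> ln X" using X0 XX0 by auto
    define N where "N = nat \<lceil>log 2 (ln X)\<rceil>"
    have XN: "ln X \<le> 2^N" and PX: "(\<Prod>p\<in>{p. prime p \<and> p \<le> 2^N}. 1 + 31 / real p) \<le> ln X"
      using prime_prod_bound[OF Xe big] unfolding N_def by auto
    let ?S = "Hset a Y q c H"
    have "Hsum a Y q c H = (\<Sum>v\<in>?S. \<Prod>j=1..5. rho (v j))" unfolding Hsum_def ..
    also have "\<dots> \<le> (\<Sum>v\<in>?S. \<Sum>j=1..5. rho (v j) ^ 5)"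
    proof (rule sum_mono)
      fix v :: "nat \<Rightarrow> int"
      have "(\<Prod>j\<in>{1..5::nat}. rho (v j)) \<le> (\<Sum>j\<in>{1..5::nat}. rho (v j) ^ card {1..5::nat})"
        by (rule prod_le_sum_pow) (auto intro: order_trans[OF zero_le_one rho_ge1])
      then show "(\<Prod>j=1..5. rho (v j)) \<le> (\<Sum>j=1..5. rho (v j) ^ 5)" by simp
    qed
    also have "\<dots> = (\<Sum>j=1..5. \<Sum>v\<in>?S. rho (v j) ^ 5)" by (rule sum.swap)
    also have "\<dots> \<le> (\<Sum>j=1..5. Cf j * (\<Prod>i=1..5. H i) / real q ^ 5 * real (tau q))"
    proof (rule sum_mono)
      fix j :: nat assume j: "j \<in> {1..5}"
      show "(\<Sum>v\<in>?S. rho (v j) ^ 5) \<le> Cf j * (\<Prod>i=1..5. H i) / real q ^ 5 * real (tau q)"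
        using Cf j Xe XN PX YX q H by blast
    qed
    also have "\<dots> = (\<Sum>j=1..5. Cf j) * (\<Prod>i=1..5. H i) / real q ^ 5 * real (tau q)"
      by (simp add: sum_distrib_right sum_divide_distrib)
    finally show "Hsum a Y q c H \<le> (\<Sum>j=1..5. Cf j) * (\<Prod>i=1..5. H i) / real q ^ 5 * real (tau q)" .
  qed
qed


end
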